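(* Let $f\in\mathbb{C}[h]$ and let $V$ be a simple $\mathcal{H}(f)$-module with $\dim V=n<\infty$. If $x^nV\neq 0$, then $V\cong A'_{\mathcal{H}(f)}(\lambda,\dot z,a)$ for some $\dot z\in\mathbb{C}$, $a\in\mathbb{C}^*$ and $\lambda\in S_f$ with $|\lambda|=n$.
   Context: For $f(h)\in\mathbb{C}[h]$, $\mathcal{H}(f)$ is the unital associative $\mathbb{C}$-algebra generated by $x,y,h$ with relations $hx=xf(h)$, $yh=f(h)y$, $yx-xy=f(h)-h$. $S_f$ is the set of maps $\lambda:\mathbb{Z}\to\mathbb{C}$ with $f(\lambda(i))=\lambda(i+1)$ for all $i$; $|\lambda|$ is the nonnegative generator of the subgroup $\{m\in\mathbb{Z}\mid\lambda(i+m)=\lambda(i)\ \forall i\}$. For $\lambda\in S_f$ with $|\lambda|=m\neq0$, $\dot z\in\mathbb{C}$, $a\in\mathbb{C}^*$: $A'_{\mathcal{H}(f)}(\lambda,\dot z,a)$ is the quotient of $\mathbb{C}[t,t^{-1}]$ by $\mathbb{C}[t,t^{-1}](t^m-a)$, with $\mathcal{H}(f)$-action induced by $ht^i=\lambda(i)t^i$, $xt^i=t^{i+1}$, $yt^i=(\lambda(i)+\dot z)t^{i-1}$ ($i\in\mathbb{Z}$). *)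

theory Defs
  imports "HOL-Computational_Algebra.Polynomial" "Jordan_Normal_Form.Matrix"
begin

definition poly_mat :: "nat \<Rightarrow> complex poly \<Rightarrow> complex mat \<Rightarrow> complex mat" where
  "poly_mat n f A = foldr (\<lambda>c M. c \<cdot>\<^sub>m 1\<^sub>m n + A * M) (coeffs f) (0\<^sub>m n n)"

definition Hf_module :: "complex poly \<Rightarrow> nat \<Rightarrow> complex mat \<Rightarrow> complex mat \<Rightarrow> complex mat \<Rightarrow> bool" where
  "Hf_module f n X Y H \<longleftrightarrow>
     X \<in> carrier_mat n n \<and> Y \<in> carrier_mat n n \<and> H \<in> carrier_mat n n \<and>
     H * X = X * poly_mat n f H \<and>
     Y * H = poly_mat n f H * Y \<and>
     Y * X - X * Y = poly_mat n f H - H"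

definition Hf_submodule :: "nat \<Rightarrow> complex mat \<Rightarrow> complex mat \<Rightarrow> complex mat \<Rightarrow> complex vec set \<Rightarrow> bool" where
  "Hf_submodule n X Y H W \<longleftrightarrow>
     W \<subseteq> carrier_vec n \<and> 0\<^sub>v n \<in> W \<and>
     (\<forall>v\<in>W. \<forall>w\<in>W. v + w \<in> W) \<and> (\<forall>c. \<forall>v\<in>W. c \<cdot>\<^sub>v v \<in> W) \<and>
     (\<forall>v\<in>W. X *\<^sub>v v \<in> W \<and> Y *\<^sub>v v \<in> W \<and> H *\<^sub>v v \<in> W)"

definition Hf_simple :: "complex poly \<Rightarrow> nat \<Rightarrow> complex mat \<Rightarrow> complex mat \<Rightarrow> complex mat \<Rightarrow> bool" where
  "Hf_simple f n X Y H \<longleftrightarrow> Hf_module f n X Y H \<and> n \<noteq> 0 \<and>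
     (\<forall>W. Hf_submodule n X Y H W \<longrightarrow> W = {0\<^sub>v n} \<or> W = carrier_vec n)"

definition Hf_iso :: "nat \<Rightarrow> complex mat \<Rightarrow> complex mat \<Rightarrow> complex mat \<Rightarrow>
                      complex mat \<Rightarrow> complex mat \<Rightarrow> complex mat \<Rightarrow> bool" where
  "Hf_iso n X Y H X' Y' H' \<longleftrightarrow>
     (\<exists>P \<in> carrier_mat n n. invertible_mat P \<and>
        P * X = X' * P \<and> P * Y = Y' * P \<and> P * H = H' * P)"

definition S_f :: "complex poly \<Rightarrow> (int \<Rightarrow> complex) set" where
  "S_f f = {lam. \<forall>i. poly f (lam i) = lam (i + 1)}"

definition lam_period :: "(int \<Rightarrow> complex) \<Rightarrow> nat" where
  "lam_period lam = (THE g::nat. {m::int. \<forall>i. lam (i + m) = lam i} = range (\<lambda>k::int. k * int g))"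

text \<open>The quotient C[t,t^-1]/(t^m - a) has basis t^0,...,t^(m-1), identified with the
  unit vectors of C^m; the class of t^i (i in Z) is a^(i div m) t^(i mod m).\<close>
definition tpow :: "nat \<Rightarrow> complex \<Rightarrow> int \<Rightarrow> complex vec" where
  "tpow m a i = (a powi (i div int m)) \<cdot>\<^sub>v unit_vec m (nat (i mod int m))"

text \<open>Matrices (w.r.t. the basis t^0..t^(m-1)) of the actions of x, y, h on
  A'(lambda, zdot, a): x t^i = t^(i+1), y t^i = (lambda i + zdot) t^(i-1), h t^i = lambda i t^i.\<close>
definition A'_X :: "nat \<Rightarrow> complex \<Rightarrow> complex mat" where
  "A'_X m a = mat m m (\<lambda>(r, j). tpow m a (int j + 1) $ r)"

definition A'_Y :: "(int \<Rightarrow> complex) \<Rightarrow> complex \<Rightarrow> nat \<Rightarrow> complex \<Rightarrow> complex mat" where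
  "A'_Y lam zd m a = mat m m (\<lambda>(r, j). ((lam (int j) + zd) \<cdot>\<^sub>v tpow m a (int j - 1)) $ r)"

definition A'_H :: "(int \<Rightarrow> complex) \<Rightarrow> nat \<Rightarrow> complex \<Rightarrow> complex mat" where
  "A'_H lam m a = mat m m (\<lambda>(r, j). (lam (int j) \<cdot>\<^sub>v tpow m a (int j)) $ r)"

end

theory Submission
  imports Defs "Jordan_Normal_Form.Schur_Decomposition"
begin


lemma mat_eq_vecI:
  fixes A B :: "'a::comm_ring_1 mat"
  assumes A: "A \<in> carrier_mat nr nc" and B: "B \<in> carrier_mat nr nc"
    and eq: "\<And>v. v \<in> carrier_vec nc \<Longrightarrow> A *\<^sub>v v = B *\<^sub>v v"
  shows "A = B"
proof (rule eq_matI)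
  fix i j assume i: "i < dim_row B" and j: "j < dim_col B"
  have "A *\<^sub>v unit_vec nc j = B *\<^sub>v unit_vec nc j" by (rule eq, simp)
  hence "(A *\<^sub>v unit_vec nc j) $ i = (B *\<^sub>v unit_vec nc j) $ i" by simp
  thus "A $$ (i, j) = B $$ (i, j)" using A B i j by simp
qed (use A B in auto)

fun app :: "complex mat \<Rightarrow> complex list \<Rightarrow> complex vec \<Rightarrow> complex vec" where
  "app A [] v = v"
| "app A (r # rs) v = app A rs (A *\<^sub>v v - r \<cdot>\<^sub>v v)"

lemma app_carrier: "A \<in> carrier_mat n n \<Longrightarrow> v \<in> carrier_vec n \<Longrightarrow> app A rs v \<in> carrier_vec n"
  by (induction rs arbitrary: v) auto

lemma app_append: "app A (xs @ ys) v = app A ys (app A xs v)"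
  by (induction xs arbitrary: v) auto

lemma row_sum_tri:
  fixes T :: "complex mat"
  assumes T: "T \<in> carrier_mat n n" and ut: "upper_triangular T" and v: "v \<in> carrier_vec n"
    and r: "r < n" and z: "\<And>j. r < j \<Longrightarrow> j < n \<Longrightarrow> v $ j = 0"
  shows "(T *\<^sub>v v) $ r = T $$ (r, r) * v $ r"
proof -
  have "(T *\<^sub>v v) $ r = (\<Sum>j\<in>{0..<n}. T $$ (r, j) * v $ j)"
    using T v r by (simp add: scalar_prod_def)
  also have "\<dots> = (\<Sum>j\<in>{0..<n}. if j = r then T $$ (r, r) * v $ r else 0)"
  proof (rule sum.cong[OF refl])
    fix j assume j: "j \<in> {0..<n}"
    show "T $$ (r, j) * v $ j = (if j = r then T $$ (r, r) * v $ r else 0)"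
    proof (cases "j < r")
      case True
      hence "T $$ (r, j) = 0" using ut T r by (auto simp: upper_triangular_def)
      thus ?thesis using True by simp
    next
      case False
      thus ?thesis using z[of j] j by auto
    qed
  qed
  also have "\<dots> = T $$ (r, r) * v $ r" using r by simp
  finally show ?thesis .
qed

lemma tri_kill:
  fixes T :: "complex mat"
  assumes T: "T \<in> carrier_mat n n" and ut: "upper_triangular T"
  shows "k \<le> n \<Longrightarrow> v \<in> carrier_vec n \<Longrightarrow> (\<forall>r. k \<le> r \<longrightarrow> r < n \<longrightarrow> v $ r = 0) \<Longrightarrow>
    app T (rev (map (\<lambda>i. T $$ (i, i)) [0..<k])) v = 0\<^sub>v n"
proof (induction k arbitrary: v)
  case 0
  then show ?case by (intro eq_vecI) auto
next
  case (Suc k)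
  define w where "w = T *\<^sub>v v - T $$ (k, k) \<cdot>\<^sub>v v"
  have w: "w \<in> carrier_vec n" using T Suc.prems unfolding w_def by auto
  have wz: "\<forall>r. k \<le> r \<longrightarrow> r < n \<longrightarrow> w $ r = 0"
  proof (intro allI impI)
    fix r assume kr: "k \<le> r" and rn: "r < n"
    have tv: "(T *\<^sub>v v) $ r = T $$ (r, r) * v $ r"
      by (rule row_sum_tri[OF T ut Suc.prems(2) rn]) (use Suc.prems(3) kr in auto)
    show "w $ r = 0"
    proof (cases "r = k")
      case True thus ?thesis using tv rn T Suc.prems(2) unfolding w_def by simp
    next
      case False
      hence "v $ r = 0" using Suc.prems(3) kr rn by auto
      thus ?thesis using tv rn T Suc.prems(2) unfolding w_def by simp
    qed
  qed
  have "app T (rev (map (\<lambda>i. T $$ (i, i)) [0..<Suc k])) v = 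
        app T (rev (map (\<lambda>i. T $$ (i, i)) [0..<k])) w" unfolding w_def by simp
  also have "\<dots> = 0\<^sub>v n" using Suc.IH[OF _ w wz] Suc.prems(1) by simp
  finally show ?case .
qed



lemma app_sim:
  assumes A: "A \<in> carrier_mat n n" and B: "B \<in> carrier_mat n n" and P: "P \<in> carrier_mat n n"
    and Q: "Q \<in> carrier_mat n n" and AB: "A = P * B * Q" and QP: "Q * P = 1\<^sub>m n"
  shows "u \<in> carrier_vec n \<Longrightarrow> app A rs (P *\<^sub>v u) = P *\<^sub>v (app B rs u)"
proof (induction rs arbitrary: u)
  case Nil thus ?case by simp
next
  case (Cons r rs)
  have "A *\<^sub>v (P *\<^sub>v u) = P *\<^sub>v (B *\<^sub>v (Q *\<^sub>v (P *\<^sub>v u)))"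
    using P B Q Cons.prems unfolding AB by (simp add: assoc_mult_mat_vec[of _ n n _ n])
  also have "Q *\<^sub>v (P *\<^sub>v u) = u"
    using P Q Cons.prems QP by (metis assoc_mult_mat_vec one_mult_mat_vec)
  finally have 1: "A *\<^sub>v (P *\<^sub>v u) - r \<cdot>\<^sub>v (P *\<^sub>v u) = P *\<^sub>v (B *\<^sub>v u - r \<cdot>\<^sub>v u)"
    using P B Cons.prems by (simp add: mult_minus_distrib_mat_vec mult_mat_vec)
  show ?case using Cons.IH[of "B *\<^sub>v u - r \<cdot>\<^sub>v u"] B Cons.prems by (simp add: 1)
qed

lemma CH:
  fixes A :: "complex mat"
  assumes A: "A \<in> carrier_mat n n" and cp: "char_poly A = (\<Prod>e\<leftarrow>es. [:- e, 1:])"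
    and v: "v \<in> carrier_vec n"
  shows "app A (rev es) v = 0\<^sub>v n"
proof -
  obtain B P Q where sd: "schur_decomposition A es = (B, P, Q)" by (cases "schur_decomposition A es") auto
  from schur_decomposition[OF A cp sd] have sim: "similar_mat_wit A B P Q"
    and ut: "upper_triangular B" and dg: "diag_mat B = es" by auto
  from sim A have B: "B \<in> carrier_mat n n" and P: "P \<in> carrier_mat n n" and Q: "Q \<in> carrier_mat n n"
    and QP: "Q * P = 1\<^sub>m n" and PQ: "P * Q = 1\<^sub>m n" and AB: "A = P * B * Q"
    unfolding similar_mat_wit_def Let_def by auto
  have es: "es = map (\<lambda>i. B $$ (i, i)) [0..<n]" using dg B unfolding diag_mat_def by auto
  have Qv: "Q *\<^sub>v v \<in> carrier_vec n" using Q v by simp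
  have "v = P *\<^sub>v (Q *\<^sub>v v)" using P Q v PQ by (metis assoc_mult_mat_vec one_mult_mat_vec)
  hence "app A (rev es) v = P *\<^sub>v app B (rev es) (Q *\<^sub>v v)"
    using app_sim[OF A B P Q AB QP Qv] by metis
  also have "app B (rev es) (Q *\<^sub>v v) = 0\<^sub>v n"
    unfolding es by (rule tri_kill[OF B ut le_refl Qv]) auto
  finally show ?thesis using P by auto
qed

lemma krylov:
  fixes A :: "complex mat"
  assumes A: "A \<in> carrier_mat n n" and K: "K \<subseteq> carrier_vec n"
    and cl: "\<And>u r. u \<in> K \<Longrightarrow> A *\<^sub>v u - r \<cdot>\<^sub>v u \<in> K"
  shows "w \<in> K \<Longrightarrow> w \<noteq> 0\<^sub>v n \<Longrightarrow> app A rs w = 0\<^sub>v n \<Longrightarrow> \<exists>u\<in>K. u \<noteq> 0\<^sub>v n \<and> (\<exists>c. A *\<^sub>v u = c \<cdot>\<^sub>v u)"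
proof (induction rs arbitrary: w)
  case Nil thus ?case by simp
next
  case (Cons r rs)
  show ?case
  proof (cases "A *\<^sub>v w - r \<cdot>\<^sub>v w = 0\<^sub>v n")
    case True
    have "A *\<^sub>v w = r \<cdot>\<^sub>v w"
    proof (rule eq_vecI)
      fix i assume i: "i < dim_vec (r \<cdot>\<^sub>v w)"
      have "(A *\<^sub>v w - r \<cdot>\<^sub>v w) $ i = 0" using True i Cons.prems(1) K by auto
      thus "(A *\<^sub>v w) $ i = (r \<cdot>\<^sub>v w) $ i" using i A Cons.prems K by auto
    qed (use A Cons.prems K in auto)
    thus ?thesis using Cons.prems by blast
  next
    case False
    thus ?thesis using Cons.IH[of "A *\<^sub>v w - r \<cdot>\<^sub>v w"] Cons.prems cl by auto
  qed
qed

lemma eigvec_in: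
  fixes A :: "complex mat"
  assumes A: "A \<in> carrier_mat n n" and K: "K \<subseteq> carrier_vec n"
    and cl: "\<And>u r. u \<in> K \<Longrightarrow> A *\<^sub>v u - r \<cdot>\<^sub>v u \<in> K"
    and w: "w \<in> K" "w \<noteq> 0\<^sub>v n"
  shows "\<exists>u\<in>K. u \<noteq> 0\<^sub>v n \<and> (\<exists>c. A *\<^sub>v u = c \<cdot>\<^sub>v u)"
proof -
  obtain es where cp: "char_poly A = (\<Prod>e\<leftarrow>es. [:- e, 1:])" using char_poly_factorized[OF A] by blast
  have "app A (rev es) w = 0\<^sub>v n" using CH[OF A cp] w K by auto
  thus ?thesis using krylov[OF A K cl w] by blast
qed


lemma pm_pCons:
  assumes A: "A \<in> carrier_mat n n"
  shows "poly_mat n (pCons a p) A = a \<cdot>\<^sub>m 1\<^sub>m n + A * poly_mat n p A"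
proof (cases "p = 0 \<and> a = 0")
  case True
  have "a \<cdot>\<^sub>m 1\<^sub>m n + A * poly_mat n p A = 0\<^sub>m n n"
    using True A by (intro eq_matI) (auto simp: poly_mat_def)
  thus ?thesis using True by (simp add: poly_mat_def)
next
  case False
  hence "coeffs (pCons a p) = a # coeffs p" by (auto simp: cCons_def)
  thus ?thesis by (simp add: poly_mat_def)
qed

lemma pm_carrier:
  assumes A: "A \<in> carrier_mat n n"
  shows "poly_mat n p A \<in> carrier_mat n n"
proof (induction p rule: pCons_induct)
  case 0 thus ?case by (simp add: poly_mat_def)
next
  case (pCons a p) thus ?case using A by (simp add: pm_pCons)
qed

lemma smult_one_vec: "v \<in> carrier_vec n \<Longrightarrow> (a \<cdot>\<^sub>m 1\<^sub>m n) *\<^sub>v v = a \<cdot>\<^sub>v (v :: 'a :: comm_ring_1 vec)"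
proof -
  assume v: "v \<in> carrier_vec n"
  have "a \<cdot>\<^sub>v v = a \<cdot>\<^sub>v (1\<^sub>m n *\<^sub>v v)" using v by auto
  also have "\<dots> = (a \<cdot>\<^sub>m 1\<^sub>m n) *\<^sub>v v" using v by auto
  finally show ?thesis by simp
qed

lemma pm_pCons_vec:
  assumes A: "A \<in> carrier_mat n n" and v: "v \<in> carrier_vec n"
  shows "poly_mat n (pCons a p) A *\<^sub>v v = a \<cdot>\<^sub>v v + A *\<^sub>v (poly_mat n p A *\<^sub>v v)"
  using A v pm_carrier[OF A, of p]
  by (simp add: pm_pCons add_mult_distrib_mat_vec[of _ n n] assoc_mult_mat_vec[of _ n n _ n] smult_one_vec)
lemma zero_mat_vec: "v \<in> carrier_vec m \<Longrightarrow> 0\<^sub>m n m *\<^sub>v v = (0\<^sub>v n :: 'a :: comm_ring_1 vec)"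
  by (intro eq_vecI) (auto simp: scalar_prod_def)

lemma mat_vec_zero: "C \<in> carrier_mat n m \<Longrightarrow> C *\<^sub>v 0\<^sub>v m = (0\<^sub>v n :: 'a :: comm_ring_1 vec)"
  by (intro eq_vecI) (auto simp: scalar_prod_def)

lemma pm_eig:
  assumes A: "A \<in> carrier_mat n n" and v: "v \<in> carrier_vec n" and Av: "A *\<^sub>v v = \<mu> \<cdot>\<^sub>v v"
  shows "poly_mat n p A *\<^sub>v v = poly p \<mu> \<cdot>\<^sub>v v"
proof (induction p rule: pCons_induct)
  case 0 thus ?case using v by (auto simp: poly_mat_def)
next
  case (pCons a p)
  have "poly_mat n (pCons a p) A *\<^sub>v v = a \<cdot>\<^sub>v v + A *\<^sub>v (poly p \<mu> \<cdot>\<^sub>v v)"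
    using pm_pCons_vec[OF A v] pCons.IH by simp
  also have "\<dots> = a \<cdot>\<^sub>v v + poly p \<mu> \<cdot>\<^sub>v (\<mu> \<cdot>\<^sub>v v)" using A v Av by (simp add: mult_mat_vec)
  also have "\<dots> = poly (pCons a p) \<mu> \<cdot>\<^sub>v v"
    by (rule eq_vecI) (use v in \<open>auto simp: algebra_simps\<close>)
  finally show ?case .
qed

lemma pm_inter_vec:
  assumes A: "A \<in> carrier_mat n n" and B: "B \<in> carrier_mat m m" and C: "C \<in> carrier_mat n m"
    and AC: "A * C = C * B" and v: "v \<in> carrier_vec m"
  shows "poly_mat n p A *\<^sub>v (C *\<^sub>v v) = C *\<^sub>v (poly_mat m p B *\<^sub>v v)"
proof (induction p rule: pCons_induct)
  case 0 thus ?case using v C by (auto simp: poly_mat_def zero_mat_vec mat_vec_zero)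
next
  case (pCons a p)
  have Cv: "C *\<^sub>v v \<in> carrier_vec n" using C v by simp
  have Pv: "poly_mat m p B *\<^sub>v v \<in> carrier_vec m" by (rule mult_mat_vec_carrier[OF pm_carrier[OF B] v])
  have "poly_mat n (pCons a p) A *\<^sub>v (C *\<^sub>v v) = a \<cdot>\<^sub>v (C *\<^sub>v v) + A *\<^sub>v (C *\<^sub>v (poly_mat m p B *\<^sub>v v))"
    using pm_pCons_vec[OF A Cv] pCons.IH by simp
  also have "A *\<^sub>v (C *\<^sub>v (poly_mat m p B *\<^sub>v v)) = C *\<^sub>v (B *\<^sub>v (poly_mat m p B *\<^sub>v v))"
    using A B C Pv AC by (metis assoc_mult_mat_vec)
  also have "a \<cdot>\<^sub>v (C *\<^sub>v v) + C *\<^sub>v (B *\<^sub>v (poly_mat m p B *\<^sub>v v)) = 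
     C *\<^sub>v (a \<cdot>\<^sub>v v + B *\<^sub>v (poly_mat m p B *\<^sub>v v))"
    using C B v Pv by (simp add: mult_add_distrib_mat_vec[of _ n m] mult_mat_vec)
  also have "\<dots> = C *\<^sub>v (poly_mat m (pCons a p) B *\<^sub>v v)" using pm_pCons_vec[OF B v] by simp
  finally show ?case .
qed

lemma pm_inter:
  assumes A: "A \<in> carrier_mat n n" and B: "B \<in> carrier_mat m m" and C: "C \<in> carrier_mat n m"
    and AC: "A * C = C * B"
  shows "poly_mat n p A * C = C * poly_mat m p B"
  apply (rule mat_eq_vecI[of _ n m])
  using mult_carrier_mat[OF pm_carrier[OF A] C] mult_carrier_mat[OF C pm_carrier[OF B]] A B C pm_carrier[OF A] pm_carrier[OF B] pm_inter_vec[OF A B C AC]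
  by (auto simp: assoc_mult_mat_vec[of _ n n _ m] assoc_mult_mat_vec[of _ n m _ m])



lemma vec_eq_n: "u \<in> carrier_vec n \<Longrightarrow> w \<in> carrier_vec n \<Longrightarrow> (\<And>i. i < n \<Longrightarrow> u $ i = w $ i) \<Longrightarrow> u = w"
  by (intro eq_vecI) auto

locale hf =
  fixes f :: "complex poly" and n :: nat and X Y H :: "complex mat"
  assumes simple: "Hf_simple f n X Y H"
begin

abbreviation "F \<equiv> poly_mat n f H"

lemma X[simp]: "X \<in> carrier_mat n n" and Y[simp]: "Y \<in> carrier_mat n n" and H[simp]: "H \<in> carrier_mat n n"
  and n0: "n \<noteq> 0"
  using simple unfolding Hf_simple_def Hf_module_def by auto

lemma F[simp]: "F \<in> carrier_mat n n" by (rule pm_carrier[OF H])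

lemma dims[simp]: "dim_row X = n" "dim_row Y = n" "dim_row H = n" "dim_row F = n"
  "dim_col X = n" "dim_col Y = n" "dim_col H = n" "dim_col F = n"
  using carrier_matD[OF X] carrier_matD[OF Y] carrier_matD[OF H] carrier_matD[OF F] by auto

lemma rels: "H * X = X * F" "Y * H = F * Y" "Y * X - X * Y = F - H"
  using simple unfolding Hf_simple_def Hf_module_def by auto

lemma simpl: "Hf_submodule n X Y H W \<Longrightarrow> W = {0\<^sub>v n} \<or> W = carrier_vec n"
  using simple unfolding Hf_simple_def by auto

lemma cm_closed[simp]:
  "A \<in> carrier_mat n n \<Longrightarrow> B \<in> carrier_mat n n \<Longrightarrow> A * B \<in> carrier_mat n n"
  "A \<in> carrier_mat n n \<Longrightarrow> B \<in> carrier_mat n n \<Longrightarrow> A + B \<in> carrier_mat n n"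
  "A \<in> carrier_mat n n \<Longrightarrow> B \<in> carrier_mat n n \<Longrightarrow> A - B \<in> carrier_mat n n"
  "A \<in> carrier_mat n n \<Longrightarrow> c \<cdot>\<^sub>m A \<in> carrier_mat n n"
  for A B :: "complex mat" by auto

lemma mv_carrier[simp]: "A \<in> carrier_mat n n \<Longrightarrow> v \<in> carrier_vec n \<Longrightarrow> A *\<^sub>v v \<in> carrier_vec n"
  for A :: "complex mat" by auto

lemma assoc_v[simp]: "A \<in> carrier_mat n n \<Longrightarrow> B \<in> carrier_mat n n \<Longrightarrow> v \<in> carrier_vec n \<Longrightarrow>
   (A * B) *\<^sub>v v = A *\<^sub>v (B *\<^sub>v (v :: complex vec))"
  by (rule assoc_mult_mat_vec) auto

lemma lin_v[simp]:
  "A \<in> carrier_mat n n \<Longrightarrow> u \<in> carrier_vec n \<Longrightarrow> v \<in> carrier_vec n \<Longrightarrow> A *\<^sub>v (u + v) = A *\<^sub>v u + A *\<^sub>v (v :: complex vec)"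
  "A \<in> carrier_mat n n \<Longrightarrow> u \<in> carrier_vec n \<Longrightarrow> v \<in> carrier_vec n \<Longrightarrow> A *\<^sub>v (u - v) = A *\<^sub>v u - A *\<^sub>v (v :: complex vec)"
  "A \<in> carrier_mat n n \<Longrightarrow> u \<in> carrier_vec n \<Longrightarrow> A *\<^sub>v (c \<cdot>\<^sub>v u) = c \<cdot>\<^sub>v (A *\<^sub>v (u :: complex vec))"
  by (auto simp: mult_add_distrib_mat_vec mult_minus_distrib_mat_vec mult_mat_vec)

lemma R1: "v \<in> carrier_vec n \<Longrightarrow> H *\<^sub>v (X *\<^sub>v v) = X *\<^sub>v (F *\<^sub>v v)"
  using rels(1) by (metis assoc_v X H F)
lemma R2: "v \<in> carrier_vec n \<Longrightarrow> Y *\<^sub>v (H *\<^sub>v v) = F *\<^sub>v (Y *\<^sub>v v)"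
  using rels(2) by (metis assoc_v Y H F)
lemma R3: "v \<in> carrier_vec n \<Longrightarrow> Y *\<^sub>v (X *\<^sub>v v) = X *\<^sub>v (Y *\<^sub>v v) + F *\<^sub>v v - H *\<^sub>v v"
proof -
  assume v: "v \<in> carrier_vec n"
  have "(Y * X - X * Y) *\<^sub>v v = (F - H) *\<^sub>v v" using rels(3) by simp
  moreover have "(Y * X - X * Y) *\<^sub>v v = (Y * X) *\<^sub>v v - (X * Y) *\<^sub>v v"
    by (rule minus_mult_distrib_mat_vec[of _ n n]) (use v in auto)
  moreover have "(F - H) *\<^sub>v v = F *\<^sub>v v - H *\<^sub>v v"
    by (rule minus_mult_distrib_mat_vec[of _ n n]) (use v in auto)
  ultimately have "Y *\<^sub>v (X *\<^sub>v v) - X *\<^sub>v (Y *\<^sub>v v) = F *\<^sub>v v - H *\<^sub>v v"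
    using v by simp
  note eq = this
  show ?thesis
  proof (rule vec_eq_n[of _ n])
    fix i assume i: "i < n"
    from arg_cong[OF eq, of "\<lambda>w. w $ i"] i v
    show "(Y *\<^sub>v (X *\<^sub>v v)) $ i = (X *\<^sub>v (Y *\<^sub>v v) + F *\<^sub>v v - H *\<^sub>v v) $ i"
      by (simp del: index_mult_mat_vec add: algebra_simps)
  qed (use v in auto)
qed

lemma sub_img:
  assumes C: "C \<in> carrier_mat n m" and A1: "A1 \<in> carrier_mat m m" and A2: "A2 \<in> carrier_mat m m"
    and A3: "A3 \<in> carrier_mat m m"
    and c1: "X * C = C * A1" and c2: "Y * C = C * A2" and c3: "H * C = C * A3"
  shows "Hf_submodule n X Y H {C *\<^sub>v w | w. w \<in> carrier_vec m}"
  unfolding Hf_submodule_def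
proof (intro conjI ballI allI)
  show "{C *\<^sub>v w |w. w \<in> carrier_vec m} \<subseteq> carrier_vec n" using C by auto
  show "0\<^sub>v n \<in> {C *\<^sub>v w |w. w \<in> carrier_vec m}" using C mat_vec_zero[OF C]
    by (intro CollectI exI[of _ "0\<^sub>v m"]) auto
  fix v assume "v \<in> {C *\<^sub>v w |w. w \<in> carrier_vec m}"
  then obtain w where w: "w \<in> carrier_vec m" and v: "v = C *\<^sub>v w" by auto
  {
    fix v' assume "v' \<in> {C *\<^sub>v w |w. w \<in> carrier_vec m}"
    then obtain w' where w': "w' \<in> carrier_vec m" and v': "v' = C *\<^sub>v w'" by auto
    show "v + v' \<in> {C *\<^sub>v w |w. w \<in> carrier_vec m}" unfolding v v' using C w w'
      by (intro CollectI exI[of _ "w + w'"]) (auto simp: mult_add_distrib_mat_vec)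
  }
  fix c
  show "c \<cdot>\<^sub>v v \<in> {C *\<^sub>v w |w. w \<in> carrier_vec m}" unfolding v using C w
    by (intro CollectI exI[of _ "c \<cdot>\<^sub>v w"]) (auto simp: mult_mat_vec)
  show "X *\<^sub>v v \<in> {C *\<^sub>v w |w. w \<in> carrier_vec m}" unfolding v using C w A1 c1
    proof (intro CollectI exI[of _ "A1 *\<^sub>v w"] conjI)
    show "X *\<^sub>v (C *\<^sub>v w) = C *\<^sub>v (A1 *\<^sub>v w)"
      using assoc_mult_mat_vec[OF X C w] assoc_mult_mat_vec[OF C A1 w] c1 by simp
  qed (use A1 w in simp)
  show "Y *\<^sub>v v \<in> {C *\<^sub>v w |w. w \<in> carrier_vec m}" unfolding v using C w A2 c2
    proof (intro CollectI exI[of _ "A2 *\<^sub>v w"] conjI)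
    show "Y *\<^sub>v (C *\<^sub>v w) = C *\<^sub>v (A2 *\<^sub>v w)"
      using assoc_mult_mat_vec[OF Y C w] assoc_mult_mat_vec[OF C A2 w] c2 by simp
  qed (use A2 w in simp)
  show "H *\<^sub>v v \<in> {C *\<^sub>v w |w. w \<in> carrier_vec m}" unfolding v using C w A3 c3
    proof (intro CollectI exI[of _ "A3 *\<^sub>v w"] conjI)
    show "H *\<^sub>v (C *\<^sub>v w) = C *\<^sub>v (A3 *\<^sub>v w)"
      using assoc_mult_mat_vec[OF H C w] assoc_mult_mat_vec[OF C A3 w] c3 by simp
  qed (use A3 w in simp)
qed

lemma sub_eig:
  assumes M: "M \<in> carrier_mat n n"
    and cX: "\<And>v. v \<in> carrier_vec n \<Longrightarrow> M *\<^sub>v (X *\<^sub>v v) = X *\<^sub>v (M *\<^sub>v v)"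
    and cY: "\<And>v. v \<in> carrier_vec n \<Longrightarrow> M *\<^sub>v (Y *\<^sub>v v) = Y *\<^sub>v (M *\<^sub>v v)"
    and cH: "\<And>v. v \<in> carrier_vec n \<Longrightarrow> M *\<^sub>v (H *\<^sub>v v) = H *\<^sub>v (M *\<^sub>v v)"
  shows "Hf_submodule n X Y H {v \<in> carrier_vec n. M *\<^sub>v v = c \<cdot>\<^sub>v v}"
  unfolding Hf_submodule_def
proof (intro conjI ballI allI)
  show "{v \<in> carrier_vec n. M *\<^sub>v v = c \<cdot>\<^sub>v v} \<subseteq> carrier_vec n" by auto
  show "0\<^sub>v n \<in> {v \<in> carrier_vec n. M *\<^sub>v v = c \<cdot>\<^sub>v v}" using mat_vec_zero[OF M] by auto
  fix v assume "v \<in> {v \<in> carrier_vec n. M *\<^sub>v v = c \<cdot>\<^sub>v v}"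
  hence v: "v \<in> carrier_vec n" and Mv: "M *\<^sub>v v = c \<cdot>\<^sub>v v" by auto
  {
    fix v' assume "v' \<in> {v \<in> carrier_vec n. M *\<^sub>v v = c \<cdot>\<^sub>v v}"
    hence v': "v' \<in> carrier_vec n" and Mv': "M *\<^sub>v v' = c \<cdot>\<^sub>v v'" by auto
    show "v + v' \<in> {v \<in> carrier_vec n. M *\<^sub>v v = c \<cdot>\<^sub>v v}" using v v' M Mv Mv'
      by (auto simp: smult_add_distrib_vec[of _ n])
  }
  fix a
  have "M *\<^sub>v (a \<cdot>\<^sub>v v) = c \<cdot>\<^sub>v (a \<cdot>\<^sub>v v)" using M v Mv
    by (intro vec_eq_n[of _ n]) (auto simp del: index_mult_mat_vec)
  thus "a \<cdot>\<^sub>v v \<in> {v \<in> carrier_vec n. M *\<^sub>v v = c \<cdot>\<^sub>v v}" using v by auto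
  show "X *\<^sub>v v \<in> {v \<in> carrier_vec n. M *\<^sub>v v = c \<cdot>\<^sub>v v}" using v cX Mv by auto
  show "Y *\<^sub>v v \<in> {v \<in> carrier_vec n. M *\<^sub>v v = c \<cdot>\<^sub>v v}" using v cY Mv by auto
  show "H *\<^sub>v v \<in> {v \<in> carrier_vec n. M *\<^sub>v v = c \<cdot>\<^sub>v v}" using v cH Mv by auto
qed

end

context hf begin

lemma Zv: "v \<in> carrier_vec n \<Longrightarrow> (X * Y - H) *\<^sub>v v = X *\<^sub>v (Y *\<^sub>v v) - H *\<^sub>v v"
  using minus_mult_distrib_mat_vec[of "X * Y" n n H v] by simp

lemma Zc:
  assumes v: "v \<in> carrier_vec n"
  shows "(X * Y - H) *\<^sub>v (X *\<^sub>v v) = X *\<^sub>v ((X * Y - H) *\<^sub>v v)"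
    "(X * Y - H) *\<^sub>v (Y *\<^sub>v v) = Y *\<^sub>v ((X * Y - H) *\<^sub>v v)"
    "(X * Y - H) *\<^sub>v (H *\<^sub>v v) = H *\<^sub>v ((X * Y - H) *\<^sub>v v)"
  using v by (auto intro!: vec_eq_n[of _ n] simp: Zv R1 R2 R3 algebra_simps simp del: index_mult_mat_vec)

lemma central: "\<exists>zd. \<forall>v \<in> carrier_vec n. X *\<^sub>v (Y *\<^sub>v v) = H *\<^sub>v v + zd \<cdot>\<^sub>v v"
proof -
  let ?M = "X * Y - H"
  have M: "?M \<in> carrier_mat n n" by simp
  have e0: "unit_vec n 0 \<noteq> (0\<^sub>v n :: complex vec)"
  proof
    assume eq: "unit_vec n 0 = (0\<^sub>v n :: complex vec)"
    have "(unit_vec n 0 :: complex vec) $ 0 = 1" using n0 by simp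
    moreover have "(0\<^sub>v n :: complex vec) $ 0 = 0" using n0 by simp
    ultimately show False using eq by simp
  qed
  obtain u c where u: "u \<in> carrier_vec n" "u \<noteq> 0\<^sub>v n" and Mu: "?M *\<^sub>v u = c \<cdot>\<^sub>v u"
  proof -
    have "\<exists>u\<in>carrier_vec n. u \<noteq> 0\<^sub>v n \<and> (\<exists>c. ?M *\<^sub>v u = c \<cdot>\<^sub>v u)"
      by (rule eigvec_in[OF M order_refl _ _ e0]) auto
    thus ?thesis using that by blast
  qed
  have sub: "Hf_submodule n X Y H {v \<in> carrier_vec n. ?M *\<^sub>v v = c \<cdot>\<^sub>v v}"
    by (rule sub_eig[OF M]) (auto simp: Zc)
  have "{v \<in> carrier_vec n. ?M *\<^sub>v v = c \<cdot>\<^sub>v v} \<noteq> {0\<^sub>v n}" using u Mu by auto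
  hence all: "{v \<in> carrier_vec n. ?M *\<^sub>v v = c \<cdot>\<^sub>v v} = carrier_vec n" using simpl[OF sub] by auto
  show ?thesis
  proof (intro exI ballI)
    fix v :: "complex vec" assume v: "v \<in> carrier_vec n"
    have "v \<in> {v \<in> carrier_vec n. ?M *\<^sub>v v = c \<cdot>\<^sub>v v}" using all v by simp
    hence "X *\<^sub>v (Y *\<^sub>v v) - H *\<^sub>v v = c \<cdot>\<^sub>v v" using Zv[OF v] by simp
    note eq = this
    show "X *\<^sub>v (Y *\<^sub>v v) = H *\<^sub>v v + c \<cdot>\<^sub>v v"
    proof (rule vec_eq_n[of _ n])
      fix i assume i: "i < n"
      from arg_cong[OF eq, of "\<lambda>w. w $ i"] i v
      show "(X *\<^sub>v (Y *\<^sub>v v)) $ i = (H *\<^sub>v v + c \<cdot>\<^sub>v v) $ i"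
        by (auto simp: algebra_simps simp del: index_mult_mat_vec)
    qed (use v in auto)
  qed
qed

end


lemma mat_col_eqI: "A \<in> carrier_mat nr nc \<Longrightarrow> B \<in> carrier_mat nr nc \<Longrightarrow> (\<And>j. j < nc \<Longrightarrow> col A j = col B j) \<Longrightarrow> A = B"
proof (rule eq_matI)
  fix i j assume A: "A \<in> carrier_mat nr nc" and B: "B \<in> carrier_mat nr nc" and c: "\<And>j. j < nc \<Longrightarrow> col A j = col B j"
    and i: "i < dim_row B" and j: "j < dim_col B"
  have "col A j $ i = col B j $ i" using c j B by auto
  thus "A $$ (i, j) = B $$ (i, j)" using A B i j by auto
qed auto

lemma prod_filter_perm: "prod_list (map g (filter P xs @ filter (\<lambda>x. \<not> P x) xs)) = prod_list (map (g :: 'a \<Rightarrow> 'b :: comm_monoid_mult) xs)"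
  by (induction xs) (auto simp: ac_simps)

context hf begin

lemma powv_Suc: "v \<in> carrier_vec n \<Longrightarrow> (X ^\<^sub>m Suc k) *\<^sub>v v = (X ^\<^sub>m k) *\<^sub>v (X *\<^sub>v v)"
  by simp

lemma powv_0: "v \<in> carrier_vec n \<Longrightarrow> (X ^\<^sub>m 0) *\<^sub>v v = v"
  by simp

lemma powv_add: "v \<in> carrier_vec n \<Longrightarrow> (X ^\<^sub>m a) *\<^sub>v ((X ^\<^sub>m b) *\<^sub>v v) = (X ^\<^sub>m (a + b)) *\<^sub>v v"
proof (induction b arbitrary: v)
  case 0 thus ?case by simp
next
  case (Suc b)
  have "(X ^\<^sub>m a) *\<^sub>v ((X ^\<^sub>m Suc b) *\<^sub>v v) = (X ^\<^sub>m a) *\<^sub>v ((X ^\<^sub>m b) *\<^sub>v (X *\<^sub>v v))"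
    using Suc.prems by (simp only: powv_Suc)
  also have "\<dots> = (X ^\<^sub>m (a + b)) *\<^sub>v (X *\<^sub>v v)" using Suc by simp
  also have "\<dots> = (X ^\<^sub>m (a + Suc b)) *\<^sub>v v" using Suc.prems by simp
  finally show ?case .
qed

lemma powv_Suc': "v \<in> carrier_vec n \<Longrightarrow> (X ^\<^sub>m Suc k) *\<^sub>v v = X *\<^sub>v ((X ^\<^sub>m k) *\<^sub>v v)"
  using powv_add[of v 1 k] by simp

definition zd where "zd = (SOME z. \<forall>v \<in> carrier_vec n. X *\<^sub>v (Y *\<^sub>v v) = H *\<^sub>v v + z \<cdot>\<^sub>v v)"

lemma XY: "v \<in> carrier_vec n \<Longrightarrow> X *\<^sub>v (Y *\<^sub>v v) = H *\<^sub>v v + zd \<cdot>\<^sub>v v"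
  using someI_ex[OF central] unfolding zd_def by blast

lemma YX: "v \<in> carrier_vec n \<Longrightarrow> Y *\<^sub>v (X *\<^sub>v v) = F *\<^sub>v v + zd \<cdot>\<^sub>v v"
  by (auto intro!: vec_eq_n[of _ n] simp: R3 XY simp del: index_mult_mat_vec)

lemma sub_imgf:
  assumes C: "C \<in> carrier_mat n m"
    and g: "\<And>w. w \<in> carrier_vec m \<Longrightarrow> g1 w \<in> carrier_vec m \<and> g2 w \<in> carrier_vec m \<and> g3 w \<in> carrier_vec m"
    and c1: "\<And>w. w \<in> carrier_vec m \<Longrightarrow> X *\<^sub>v (C *\<^sub>v w) = C *\<^sub>v g1 w"
    and c2: "\<And>w. w \<in> carrier_vec m \<Longrightarrow> Y *\<^sub>v (C *\<^sub>v w) = C *\<^sub>v g2 w"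
    and c3: "\<And>w. w \<in> carrier_vec m \<Longrightarrow> H *\<^sub>v (C *\<^sub>v w) = C *\<^sub>v g3 w"
  shows "Hf_submodule n X Y H {C *\<^sub>v w | w. w \<in> carrier_vec m}"
  unfolding Hf_submodule_def
proof (intro conjI ballI allI)
  show "{C *\<^sub>v w |w. w \<in> carrier_vec m} \<subseteq> carrier_vec n" using C by auto
  show "0\<^sub>v n \<in> {C *\<^sub>v w |w. w \<in> carrier_vec m}" using C mat_vec_zero[OF C]
    by (intro CollectI exI[of _ "0\<^sub>v m"]) auto
  fix v assume "v \<in> {C *\<^sub>v w |w. w \<in> carrier_vec m}"
  then obtain w where w: "w \<in> carrier_vec m" and v: "v = C *\<^sub>v w" by auto
  {
    fix v' assume "v' \<in> {C *\<^sub>v w |w. w \<in> carrier_vec m}"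
    then obtain w' where w': "w' \<in> carrier_vec m" and v': "v' = C *\<^sub>v w'" by auto
    show "v + v' \<in> {C *\<^sub>v w |w. w \<in> carrier_vec m}" unfolding v v' using C w w'
      by (intro CollectI exI[of _ "w + w'"]) (auto simp: mult_add_distrib_mat_vec)
  }
  fix c
  show "c \<cdot>\<^sub>v v \<in> {C *\<^sub>v w |w. w \<in> carrier_vec m}" unfolding v using C w
    by (intro CollectI exI[of _ "c \<cdot>\<^sub>v w"]) (auto simp: mult_mat_vec)
  show "X *\<^sub>v v \<in> {C *\<^sub>v w |w. w \<in> carrier_vec m}" unfolding v using w g c1 by blast
  show "Y *\<^sub>v v \<in> {C *\<^sub>v w |w. w \<in> carrier_vec m}" unfolding v using w g c2 by blast
  show "H *\<^sub>v v \<in> {C *\<^sub>v w |w. w \<in> carrier_vec m}" unfolding v using w g c3 by blast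
qed

lemma HXk: "\<exists>B\<in>carrier_mat n n. H * X ^\<^sub>m k = X ^\<^sub>m k * B"
proof (induction k)
  case 0 thus ?case by (intro bexI[of _ H]) auto
next
  case (Suc k)
  then obtain B where B: "B \<in> carrier_mat n n" and HB: "H * X ^\<^sub>m k = X ^\<^sub>m k * B" by auto
  show ?case
  proof (intro bexI[of _ "poly_mat n f B"] mat_eq_vecI[of _ n n])
    fix v :: "complex vec" assume v: "v \<in> carrier_vec n"
    have "H * X ^\<^sub>m Suc k *\<^sub>v v = H *\<^sub>v (X *\<^sub>v ((X ^\<^sub>m k) *\<^sub>v v))" using v powv_Suc' by simp
    also have "\<dots> = X *\<^sub>v (F *\<^sub>v ((X ^\<^sub>m k) *\<^sub>v v))" using v R1 by simp
    also have "F *\<^sub>v ((X ^\<^sub>m k) *\<^sub>v v) = (X ^\<^sub>m k) *\<^sub>v (poly_mat n f B *\<^sub>v v)"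
      by (rule pm_inter_vec[OF H B _ HB v]) simp
    also have "X *\<^sub>v ((X ^\<^sub>m k) *\<^sub>v (poly_mat n f B *\<^sub>v v)) = X ^\<^sub>m Suc k * poly_mat n f B *\<^sub>v v"
      using v pm_carrier[OF B] powv_Suc' by simp
    finally show "H * X ^\<^sub>m Suc k *\<^sub>v v = X ^\<^sub>m Suc k * poly_mat n f B *\<^sub>v v" .
  qed (use B pm_carrier[OF B] in auto)
qed

lemma app_zeros: "v \<in> carrier_vec n \<Longrightarrow> set rs \<subseteq> {0} \<Longrightarrow> app X rs v = (X ^\<^sub>m length rs) *\<^sub>v v"
proof (induction rs arbitrary: v)
  case Nil thus ?case by simp
next
  case (Cons r rs)
  hence r: "r = 0" by auto
  have "X *\<^sub>v v - r \<cdot>\<^sub>v v = X *\<^sub>v v" using Cons.prems r by (intro vec_eq_n[of _ n]) auto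
  thus ?case using Cons by (simp add: powv_Suc del: pow_mat.simps)
qed

lemma app_nz: "(\<forall>r\<in>set rs. r \<noteq> 0) \<Longrightarrow> \<exists>M\<in>carrier_mat n n. (\<forall>w\<in>carrier_vec n. X *\<^sub>v (M *\<^sub>v w) = M *\<^sub>v (X *\<^sub>v w)) \<and>
   (\<forall>v\<in>carrier_vec n. app X rs v = prod_list (map uminus rs) \<cdot>\<^sub>v v + X *\<^sub>v (M *\<^sub>v v))"
proof (induction rs)
  case Nil
  show ?case
    by (intro bexI[of _ "0\<^sub>m n n"] conjI ballI) (auto intro!: vec_eq_n[of _ n] simp: zero_mat_vec mat_vec_zero)
next
  case (Cons r rs)
  then obtain M where M: "M \<in> carrier_mat n n" and cm: "\<forall>w\<in>carrier_vec n. X *\<^sub>v (M *\<^sub>v w) = M *\<^sub>v (X *\<^sub>v w)"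
    and ap: "\<forall>v\<in>carrier_vec n. app X rs v = prod_list (map uminus rs) \<cdot>\<^sub>v v + X *\<^sub>v (M *\<^sub>v v)" by auto
  define c where "c = prod_list (map uminus rs)"
  define M' where "M' = c \<cdot>\<^sub>m 1\<^sub>m n + M * (X - r \<cdot>\<^sub>m 1\<^sub>m n)"
  have M': "M' \<in> carrier_mat n n" unfolding M'_def using M by simp
  have M'v: "M' *\<^sub>v v = c \<cdot>\<^sub>v v + (M *\<^sub>v (X *\<^sub>v v) - r \<cdot>\<^sub>v (M *\<^sub>v v))" if v: "v \<in> carrier_vec n" for v
  proof -
    have "M' *\<^sub>v v = (c \<cdot>\<^sub>m 1\<^sub>m n) *\<^sub>v v + M *\<^sub>v ((X - r \<cdot>\<^sub>m 1\<^sub>m n) *\<^sub>v v)"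
      unfolding M'_def using M v by (simp add: add_mult_distrib_mat_vec[of _ n n])
    also have "(X - r \<cdot>\<^sub>m 1\<^sub>m n) *\<^sub>v v = X *\<^sub>v v - r \<cdot>\<^sub>v v"
      using v by (simp add: minus_mult_distrib_mat_vec[of _ n n] smult_one_vec)
    finally show ?thesis using v M by (simp add: smult_one_vec)
  qed
  show ?case
  proof (intro bexI[OF _ M'] conjI ballI)
    fix w :: "complex vec" assume w: "w \<in> carrier_vec n"
    show "X *\<^sub>v (M' *\<^sub>v w) = M' *\<^sub>v (X *\<^sub>v w)"
      using w M cm by (auto intro!: vec_eq_n[of _ n] simp: M'v simp del: index_mult_mat_vec)
  next
    fix v :: "complex vec" assume v: "v \<in> carrier_vec n"
    have pc: "prod_list (map uminus (r # rs)) = - r * c" unfolding c_def by simp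
    have "app X (r # rs) v = c \<cdot>\<^sub>v (X *\<^sub>v v - r \<cdot>\<^sub>v v) + X *\<^sub>v (M *\<^sub>v (X *\<^sub>v v - r \<cdot>\<^sub>v v))"
      using ap v unfolding c_def by simp
    also have "c \<cdot>\<^sub>v (X *\<^sub>v v - r \<cdot>\<^sub>v v) + X *\<^sub>v (M *\<^sub>v (X *\<^sub>v v - r \<cdot>\<^sub>v v)) = prod_list (map uminus (r # rs)) \<cdot>\<^sub>v v + X *\<^sub>v (M' *\<^sub>v v)"
      unfolding pc using v M cm
      by (auto intro!: vec_eq_n[of _ n] simp: M'v algebra_simps simp del: index_mult_mat_vec)
    finally show "app X (r # rs) v = prod_list (map uminus (r # rs)) \<cdot>\<^sub>v v + X *\<^sub>v (M' *\<^sub>v v)" .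
  qed
qed

end

lemma smult_mat_vec: "M \<in> carrier_mat nr nc \<Longrightarrow> w \<in> carrier_vec nc \<Longrightarrow> (a \<cdot>\<^sub>m M) *\<^sub>v w = a \<cdot>\<^sub>v (M *\<^sub>v (w :: 'a :: comm_ring_1 vec))"
  by (intro eq_vecI) (auto simp: scalar_prod_def sum_distrib_left ac_simps)

context hf begin

lemma Xn_fact: "\<exists>S\<in>carrier_mat n n. \<forall>v\<in>carrier_vec n. (X ^\<^sub>m n) *\<^sub>v v = (X ^\<^sub>m Suc n) *\<^sub>v (S *\<^sub>v v)"
proof -
  obtain es where cp: "char_poly X = (\<Prod>e\<leftarrow>es. [:- e, 1:])" and len: "length es = n"
    using char_poly_factorized[OF X] by blast
  define nz where "nz = filter (\<lambda>e. e \<noteq> 0) es"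
  define zs where "zs = filter (\<lambda>e. \<not> e \<noteq> 0) es"
  have cp': "char_poly X = (\<Prod>e\<leftarrow>nz @ zs. [:- e, 1:])"
    unfolding cp nz_def zs_def by (rule prod_filter_perm[symmetric])
  define k where "k = length zs"
  have kn: "k \<le> n" unfolding k_def zs_def len[symmetric] by simp
  obtain M where M: "M \<in> carrier_mat n n" and cm: "\<forall>w\<in>carrier_vec n. X *\<^sub>v (M *\<^sub>v w) = M *\<^sub>v (X *\<^sub>v w)"
    and ap: "\<forall>v\<in>carrier_vec n. app X (rev nz) v = prod_list (map uminus (rev nz)) \<cdot>\<^sub>v v + X *\<^sub>v (M *\<^sub>v v)"
    using app_nz[of "rev nz"] unfolding nz_def by auto
  define c where "c = prod_list (map uminus (rev nz))"
  have c0: "c \<noteq> 0" unfolding c_def nz_def by (auto simp: prod_list_zero_iff)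
  define S where "S = (- 1 / c) \<cdot>\<^sub>m M"
  have S: "S \<in> carrier_mat n n" unfolding S_def using M by simp
  have Sv: "S *\<^sub>v w = (- 1 / c) \<cdot>\<^sub>v (M *\<^sub>v w)" if "w \<in> carrier_vec n" for w
    unfolding S_def using M that by (rule smult_mat_vec)
  have cS: "X *\<^sub>v (S *\<^sub>v w) = S *\<^sub>v (X *\<^sub>v w)" if w: "w \<in> carrier_vec n" for w
    using w M cm by (simp add: Sv)
  have cSk: "S *\<^sub>v ((X ^\<^sub>m j) *\<^sub>v w) = (X ^\<^sub>m j) *\<^sub>v (S *\<^sub>v w)" if w: "w \<in> carrier_vec n" for w j
    using w
  proof (induction j arbitrary: w)
    case 0 thus ?case using S by simp
  next
    case (Suc j)
    have "S *\<^sub>v ((X ^\<^sub>m Suc j) *\<^sub>v w) = S *\<^sub>v ((X ^\<^sub>m j) *\<^sub>v (X *\<^sub>v w))" using Suc.prems by (simp only: powv_Suc)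
    also have "\<dots> = (X ^\<^sub>m j) *\<^sub>v (S *\<^sub>v (X *\<^sub>v w))" using Suc by simp
    also have "\<dots> = (X ^\<^sub>m j) *\<^sub>v (X *\<^sub>v (S *\<^sub>v w))" using cS Suc.prems by simp
    also have "\<dots> = (X ^\<^sub>m Suc j) *\<^sub>v (S *\<^sub>v w)" using Suc.prems S by (simp only: powv_Suc mv_carrier)
    finally show ?case .
  qed
  show ?thesis
  proof (intro bexI[OF _ S] ballI)
    fix v :: "complex vec" assume v: "v \<in> carrier_vec n"
    define u where "u = (X ^\<^sub>m k) *\<^sub>v v"
    have u: "u \<in> carrier_vec n" unfolding u_def using v by simp
    have "app X (rev (nz @ zs)) v = 0\<^sub>v n" by (rule CH[OF X cp' v])
    moreover have "app X (rev (nz @ zs)) v = app X (rev nz) u"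
    proof -
      have "app X (rev zs) v = (X ^\<^sub>m length (rev zs)) *\<^sub>v v"
        by (rule app_zeros[OF v]) (auto simp: zs_def)
      thus ?thesis unfolding u_def k_def by (simp add: app_append)
    qed
    ultimately have "c \<cdot>\<^sub>v u + X *\<^sub>v (M *\<^sub>v u) = 0\<^sub>v n" using ap u unfolding c_def by simp
    hence u1: "u = X *\<^sub>v (S *\<^sub>v u)"
    proof -
      assume eq: "c \<cdot>\<^sub>v u + X *\<^sub>v (M *\<^sub>v u) = 0\<^sub>v n"
      show ?thesis
      proof (rule vec_eq_n[of _ n])
        fix i assume i: "i < n"
        from arg_cong[OF eq, of "\<lambda>w. w $ i"] i u M c0
        show "u $ i = (X *\<^sub>v (S *\<^sub>v u)) $ i"
          by (simp add: Sv field_simps del: index_mult_mat_vec) (simp add: eq_neg_iff_add_eq_0)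
      qed (use u S in auto)
    qed
    have "(X ^\<^sub>m n) *\<^sub>v v = (X ^\<^sub>m (n - k)) *\<^sub>v u" unfolding u_def using v kn powv_add[of v "n-k" k] by simp
    also have "\<dots> = (X ^\<^sub>m (n - k)) *\<^sub>v (X *\<^sub>v ((X ^\<^sub>m k) *\<^sub>v (S *\<^sub>v v)))"
      using u1 cSk[OF v] unfolding u_def by metis
    also have "\<dots> = (X ^\<^sub>m (n - k)) *\<^sub>v ((X ^\<^sub>m Suc k) *\<^sub>v (S *\<^sub>v v))"
      using v S by (simp only: powv_Suc' mv_carrier)
    also have "\<dots> = (X ^\<^sub>m Suc n) *\<^sub>v (S *\<^sub>v v)" using v S kn powv_add[of "S *\<^sub>v v" "n-k" "Suc k"] by simp
    finally show "(X ^\<^sub>m n) *\<^sub>v v = (X ^\<^sub>m Suc n) *\<^sub>v (S *\<^sub>v v)" .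
  qed
qed

end


lemma col_unit: "(A :: 'a :: semiring_1 mat) \<in> carrier_mat nr nc \<Longrightarrow> j < nc \<Longrightarrow> col A j = A *\<^sub>v unit_vec nc (j :: nat)"
proof -
  assume A: "A \<in> carrier_mat nr nc" and j: "j < nc"
  show ?thesis
  proof (rule eq_vecI)
    fix i assume "i < dim_vec (A *\<^sub>v unit_vec nc j)"
    hence i: "i < nr" using A by simp
    have "row A i \<bullet> unit_vec nc j = row A i $ j" by (rule scalar_prod_right_unit[OF j])
    thus "col A j $ i = (A *\<^sub>v unit_vec nc j) $ i" using A i j by simp
  qed (use A in simp)
qed

context hf begin

lemma Xpow_left: "X * X ^\<^sub>m k = X ^\<^sub>m Suc k"
  by (rule mat_eq_vecI[of _ n n]) (auto simp: powv_Suc' simp del: pow_mat.simps)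

lemma Xinv:
  assumes nz: "X ^\<^sub>m n \<noteq> 0\<^sub>m n n"
  shows "\<exists>Xi\<in>carrier_mat n n. X * Xi = 1\<^sub>m n \<and> Xi * X = 1\<^sub>m n"
proof -
  obtain S where S: "S \<in> carrier_mat n n" and XS: "\<forall>v\<in>carrier_vec n. (X ^\<^sub>m n) *\<^sub>v v = (X ^\<^sub>m Suc n) *\<^sub>v (S *\<^sub>v v)"
    using Xn_fact by blast
  obtain B where B: "B \<in> carrier_mat n n" and HB: "H * X ^\<^sub>m n = X ^\<^sub>m n * B" using HXk by blast
  let ?C = "X ^\<^sub>m n"
  have C: "?C \<in> carrier_mat n n" by simp
  have sub: "Hf_submodule n X Y H {?C *\<^sub>v w | w. w \<in> carrier_vec n}"
  proof (rule sub_imgf[OF C, of "\<lambda>w. X *\<^sub>v w" "\<lambda>w. poly_mat n f B *\<^sub>v (S *\<^sub>v w) + zd \<cdot>\<^sub>v (S *\<^sub>v w)" "\<lambda>w. B *\<^sub>v w"])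
    fix w :: "complex vec" assume w: "w \<in> carrier_vec n"
    show "X *\<^sub>v w \<in> carrier_vec n \<and> poly_mat n f B *\<^sub>v (S *\<^sub>v w) + zd \<cdot>\<^sub>v (S *\<^sub>v w) \<in> carrier_vec n \<and> B *\<^sub>v w \<in> carrier_vec n"
      using w S B pm_carrier[OF B] by simp
    show "X *\<^sub>v (?C *\<^sub>v w) = ?C *\<^sub>v (X *\<^sub>v w)" using w by (simp only: powv_Suc' powv_Suc[symmetric])
    show "H *\<^sub>v (?C *\<^sub>v w) = ?C *\<^sub>v (B *\<^sub>v w)" using w B HB by (metis assoc_v C H)
    have Sw: "S *\<^sub>v w \<in> carrier_vec n" using S w by simp
    have "Y *\<^sub>v (?C *\<^sub>v w) = Y *\<^sub>v (X *\<^sub>v (?C *\<^sub>v (S *\<^sub>v w)))" using XS w Sw by (simp only: powv_Suc')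
    also have "\<dots> = F *\<^sub>v (?C *\<^sub>v (S *\<^sub>v w)) + zd \<cdot>\<^sub>v (?C *\<^sub>v (S *\<^sub>v w))" using Sw YX by simp
    also have "F *\<^sub>v (?C *\<^sub>v (S *\<^sub>v w)) = ?C *\<^sub>v (poly_mat n f B *\<^sub>v (S *\<^sub>v w))"
      by (rule pm_inter_vec[OF H B C HB Sw])
    also have "?C *\<^sub>v (poly_mat n f B *\<^sub>v (S *\<^sub>v w)) + zd \<cdot>\<^sub>v (?C *\<^sub>v (S *\<^sub>v w)) =
       ?C *\<^sub>v (poly_mat n f B *\<^sub>v (S *\<^sub>v w) + zd \<cdot>\<^sub>v (S *\<^sub>v w))" using Sw pm_carrier[OF B] by simp
    finally show "Y *\<^sub>v (?C *\<^sub>v w) = ?C *\<^sub>v (poly_mat n f B *\<^sub>v (S *\<^sub>v w) + zd \<cdot>\<^sub>v (S *\<^sub>v w))" .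
  qed
  have "\<exists>j<n. ?C *\<^sub>v unit_vec n j \<noteq> 0\<^sub>v n"
  proof (rule ccontr)
    assume "\<not> ?thesis"
    hence "?C = 0\<^sub>m n n" by (intro mat_col_eqI[OF C]) (auto simp: col_unit[OF C])
    thus False using nz by simp
  qed
  then obtain j where j: "j < n" "?C *\<^sub>v unit_vec n j \<noteq> 0\<^sub>v n" by blast
  have "{?C *\<^sub>v w | w. w \<in> carrier_vec n} \<noteq> {0\<^sub>v n}" using j by (metis (mono_tags, lifting) insertI1 mem_Collect_eq singletonD unit_vec_carrier)
  hence all: "{?C *\<^sub>v w | w. w \<in> carrier_vec n} = carrier_vec n" using simpl[OF sub] by auto
  define wj where "wj j = (SOME w. w \<in> carrier_vec n \<and> ?C *\<^sub>v w = unit_vec n j)" for j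
  have wj: "wj j \<in> carrier_vec n \<and> ?C *\<^sub>v wj j = unit_vec n j" if "j < n" for j
  proof -
    have "unit_vec n j \<in> {?C *\<^sub>v w | w. w \<in> carrier_vec n}" using all by simp
    hence "\<exists>w. w \<in> carrier_vec n \<and> ?C *\<^sub>v w = unit_vec n j" by auto
    thus ?thesis unfolding wj_def by (rule someI_ex)
  qed
  define R where "R = mat n n (\<lambda>(i, j). wj j $ i)"
  have R: "R \<in> carrier_mat n n" unfolding R_def by simp
  have colR: "col R j = wj j" if "j < n" for j
    unfolding R_def using that wj[OF that] by (intro eq_vecI) auto
  have CR: "?C * R = 1\<^sub>m n"
    by (rule mat_col_eqI[of _ n n]) (use R wj colR in \<open>auto simp: col_mult2[OF C R]\<close>)
  define Xi where "Xi = X ^\<^sub>m (n - 1) * R"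
  have Xi: "Xi \<in> carrier_mat n n" unfolding Xi_def using R by simp
  have "X * Xi = X * X ^\<^sub>m (n - 1) * R" unfolding Xi_def using R by (simp add: assoc_mult_mat[of _ n n _ n _ n])
  also have "X * X ^\<^sub>m (n - 1) = ?C" using n0 Xpow_left[of "n - 1"] by simp
  finally have XXi: "X * Xi = 1\<^sub>m n" using CR by simp
  show ?thesis using XXi mat_mult_left_right_inverse[OF X Xi XXi] Xi by blast
qed

end


locale hf2 = hf +
  assumes nzX: "X ^\<^sub>m n \<noteq> 0\<^sub>m n n"
begin

definition Xi where "Xi = (SOME Xi. Xi \<in> carrier_mat n n \<and> X * Xi = 1\<^sub>m n \<and> Xi * X = 1\<^sub>m n)"

lemma Xi: "Xi \<in> carrier_mat n n" "X * Xi = 1\<^sub>m n" "Xi * X = 1\<^sub>m n"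
  using someI_ex[OF Xinv[OF nzX, unfolded Bex_def]] unfolding Xi_def by auto

lemma Xi_simps[simp]: "Xi \<in> carrier_mat n n" "dim_row Xi = n" "dim_col Xi = n"
  using Xi(1) by auto

lemma XXi: "v \<in> carrier_vec n \<Longrightarrow> X *\<^sub>v (Xi *\<^sub>v v) = v"
  using Xi(2) by (metis assoc_v X Xi_simps(1) one_mult_mat_vec)
lemma XiX: "v \<in> carrier_vec n \<Longrightarrow> Xi *\<^sub>v (X *\<^sub>v v) = v"
  using Xi(3) by (metis assoc_v X Xi_simps(1) one_mult_mat_vec)

lemma Yv: "v \<in> carrier_vec n \<Longrightarrow> Y *\<^sub>v v = Xi *\<^sub>v (H *\<^sub>v v + zd \<cdot>\<^sub>v v)"
  using XiX[of "Y *\<^sub>v v"] XY by simp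

lemma Xk_nz: "v \<in> carrier_vec n \<Longrightarrow> v \<noteq> 0\<^sub>v n \<Longrightarrow> (X ^\<^sub>m k) *\<^sub>v v \<noteq> 0\<^sub>v n"
proof (induction k arbitrary: v)
  case 0 thus ?case by simp
next
  case (Suc k)
  have "X *\<^sub>v v \<noteq> 0\<^sub>v n"
  proof
    assume "X *\<^sub>v v = 0\<^sub>v n"
    hence "Xi *\<^sub>v (X *\<^sub>v v) = 0\<^sub>v n" using mat_vec_zero[OF Xi(1)] by simp
    thus False using XiX Suc.prems by simp
  qed
  thus ?case using Suc by (simp only: powv_Suc) simp
qed

lemma eig_iter: "v \<in> carrier_vec n \<Longrightarrow> H *\<^sub>v v = \<mu> \<cdot>\<^sub>v v \<Longrightarrow>
   H *\<^sub>v ((X ^\<^sub>m k) *\<^sub>v v) = (poly f ^^ k) \<mu> \<cdot>\<^sub>v ((X ^\<^sub>m k) *\<^sub>v v)"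
proof (induction k arbitrary: v \<mu>)
  case 0 thus ?case by simp
next
  case (Suc k)
  have "H *\<^sub>v (X *\<^sub>v v) = X *\<^sub>v (F *\<^sub>v v)" using R1 Suc.prems by simp
  also have "F *\<^sub>v v = poly f \<mu> \<cdot>\<^sub>v v" by (rule pm_eig[OF H Suc.prems])
  finally have "H *\<^sub>v (X *\<^sub>v v) = poly f \<mu> \<cdot>\<^sub>v (X *\<^sub>v v)" using Suc.prems by simp
  from Suc.IH[OF _ this] Suc.prems
  show ?case by (simp only: powv_Suc funpow_Suc_right o_apply mv_carrier X)
qed

lemma cp_nz: "char_poly H \<noteq> 0" and cp_deg: "degree (char_poly H) = n"
  using degree_monic_char_poly[OF H] by auto

lemma eig_root: "v \<in> carrier_vec n \<Longrightarrow> v \<noteq> 0\<^sub>v n \<Longrightarrow> H *\<^sub>v v = \<mu> \<cdot>\<^sub>v v \<Longrightarrow> poly (char_poly H) \<mu> = 0"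
  using eigenvalue_root_char_poly[OF H, of \<mu>] unfolding eigenvalue_def eigenvector_def by auto

end

context hf2 begin

lemma cycle: "\<exists>\<mu> p v0 c. 0 < p \<and> p \<le> n \<and> (poly f ^^ p) \<mu> = \<mu> \<and>
   (\<forall>a b. a < b \<longrightarrow> b < p \<longrightarrow> (poly f ^^ a) \<mu> \<noteq> (poly f ^^ b) \<mu>) \<and>
   v0 \<in> carrier_vec n \<and> v0 \<noteq> 0\<^sub>v n \<and> H *\<^sub>v v0 = \<mu> \<cdot>\<^sub>v v0 \<and> (X ^\<^sub>m p) *\<^sub>v v0 = c \<cdot>\<^sub>v v0 \<and> c \<noteq> 0"
proof -
  have e0: "unit_vec n 0 \<noteq> (0\<^sub>v n :: complex vec)"
  proof
    assume eq: "unit_vec n 0 = (0\<^sub>v n :: complex vec)"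
    have "(unit_vec n 0 :: complex vec) $ 0 = 1" using n0 by simp
    moreover have "(0\<^sub>v n :: complex vec) $ 0 = 0" using n0 by simp
    ultimately show False using eq by simp
  qed
  obtain v \<mu> where v: "v \<in> carrier_vec n" "v \<noteq> 0\<^sub>v n" and Hv: "H *\<^sub>v v = \<mu> \<cdot>\<^sub>v v"
  proof -
    have "\<exists>u\<in>carrier_vec n. u \<noteq> 0\<^sub>v n \<and> (\<exists>c. H *\<^sub>v u = c \<cdot>\<^sub>v u)"
      by (rule eigvec_in[OF H order_refl _ _ e0]) auto
    thus ?thesis using that by blast
  qed
  define G where "G i = (poly f ^^ i) \<mu>" for i
  define E where "E = {x. poly (char_poly H) x = 0}"
  have finE: "finite E" unfolding E_def using cp_nz by (rule poly_roots_finite)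
  have cardE: "card E \<le> n" unfolding E_def using card_poly_roots_bound[OF cp_nz] cp_deg by simp
  have GE: "G i \<in> E" for i
    unfolding E_def G_def using eig_root[OF _ Xk_nz[OF v] eig_iter[OF v(1) Hv]] v by simp
  have "\<not> inj G"
  proof
    assume "inj G"
    moreover have "finite (range G)" using GE finE by (meson finite_subset image_subsetI)
    ultimately have "finite (UNIV :: nat set)" using finite_imageD by blast
    thus False by simp
  qed
  then obtain i j where ij: "i \<noteq> j" "G i = G j" unfolding inj_def by blast
  define P where "P p \<longleftrightarrow> 0 < p \<and> (\<exists>j. G j = G (j + p))" for p
  have "\<exists>p. P p"
  proof (cases "i < j")
    case True thus ?thesis using ij unfolding P_def by (intro exI[of _ "j - i"]) (auto intro!: exI[of _ i])
  next
    case False thus ?thesis using ij unfolding P_def by (intro exI[of _ "i - j"]) (auto intro!: exI[of _ j])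
  qed
  define p where "p = (LEAST p. P p)"
  have Pp: "P p" unfolding p_def by (rule LeastI_ex) fact
  then obtain j0 where p0: "0 < p" and j0: "G j0 = G (j0 + p)" unfolding P_def by blast
  define \<mu>' where "\<mu>' = G j0"
  have Gadd: "(poly f ^^ a) (G b) = G (a + b)" for a b unfolding G_def by (simp add: funpow_add)
  have per: "(poly f ^^ p) \<mu>' = \<mu>'" unfolding \<mu>'_def Gadd using j0 by (simp add: add.commute)
  have dist: "\<forall>a b. a < b \<longrightarrow> b < p \<longrightarrow> (poly f ^^ a) \<mu>' \<noteq> (poly f ^^ b) \<mu>'"
  proof (intro allI impI notI)
    fix a b assume ab: "a < b" "b < p" and eq: "(poly f ^^ a) \<mu>' = (poly f ^^ b) \<mu>'"
    have "P (b - a)" unfolding P_def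
    proof (intro conjI exI)
      show "0 < b - a" using ab by simp
      show "G (j0 + a) = G (j0 + a + (b - a))" using eq ab unfolding \<mu>'_def Gadd by (simp add: add.commute)
    qed
    moreover have "b - a < p" using ab by simp
    ultimately show False unfolding p_def using not_less_Least by blast
  qed
  have pn: "p \<le> n"
  proof -
    have inj: "inj_on (\<lambda>a. (poly f ^^ a) \<mu>') {..<p}"
      unfolding inj_on_def using dist by (metis lessThan_iff nat_neq_iff)
    have sub: "(\<lambda>a. (poly f ^^ a) \<mu>') ` {..<p} \<subseteq> E" unfolding \<mu>'_def Gadd using GE by auto
    have "p = card ((\<lambda>a. (poly f ^^ a) \<mu>') ` {..<p})" using card_image[OF inj] by simp
    also have "\<dots> \<le> card E" by (rule card_mono[OF finE sub])
    finally show ?thesis using cardE by simp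
  qed
  define v' where "v' = (X ^\<^sub>m j0) *\<^sub>v v"
  have v': "v' \<in> carrier_vec n" "v' \<noteq> 0\<^sub>v n" "H *\<^sub>v v' = \<mu>' \<cdot>\<^sub>v v'"
    unfolding v'_def \<mu>'_def G_def using v Xk_nz[OF v] eig_iter[OF v(1) Hv] by auto
  define K where "K = {u \<in> carrier_vec n. H *\<^sub>v u = \<mu>' \<cdot>\<^sub>v u}"
  have clK: "(X ^\<^sub>m p) *\<^sub>v u - r \<cdot>\<^sub>v u \<in> K" if u: "u \<in> K" for u r
  proof -
    have u1: "u \<in> carrier_vec n" and Hu: "H *\<^sub>v u = \<mu>' \<cdot>\<^sub>v u" using u unfolding K_def by auto
    have "H *\<^sub>v ((X ^\<^sub>m p) *\<^sub>v u) = \<mu>' \<cdot>\<^sub>v ((X ^\<^sub>m p) *\<^sub>v u)" using eig_iter[OF u1 Hu, of p] per by simp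
    thus ?thesis unfolding K_def using u1 Hu
      by (auto intro!: vec_eq_n[of _ n] simp: algebra_simps simp del: index_mult_mat_vec)
  qed
  have "\<exists>u\<in>K. u \<noteq> 0\<^sub>v n \<and> (\<exists>c. (X ^\<^sub>m p) *\<^sub>v u = c \<cdot>\<^sub>v u)"
    by (rule eigvec_in[of _ n]) (use clK v' in \<open>auto simp: K_def\<close>)
  then obtain v0 c where v0: "v0 \<in> K" "v0 \<noteq> 0\<^sub>v n" and Xv0: "(X ^\<^sub>m p) *\<^sub>v v0 = c \<cdot>\<^sub>v v0" by blast
  have v0c: "v0 \<in> carrier_vec n" using v0 unfolding K_def by auto
  have c0: "c \<noteq> 0"
  proof
    assume "c = 0"
    hence "(X ^\<^sub>m p) *\<^sub>v v0 = 0\<^sub>v n" using Xv0 v0c by (intro vec_eq_n[of _ n]) auto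
    thus False using Xk_nz[OF v0c v0(2)] by simp
  qed
  show ?thesis
    by (intro exI[of _ \<mu>'] exI[of _ p] exI[of _ v0] exI[of _ c])
       (use p0 pn per dist v0 v0c Xv0 c0 in \<open>auto simp: K_def\<close>)
qed

end


lemma tpow_carrier[simp]: "tpow p c i \<in> carrier_vec p" and tpow_dim[simp]: "dim_vec (tpow p c i) = p"
  unfolding tpow_def by auto

lemma tpow1: "j < p \<Longrightarrow> tpow p c (int j) = unit_vec p j"
  unfolding tpow_def by (intro eq_vecI) auto

lemma tpow2: "0 < p \<Longrightarrow> tpow p c (int p) = c \<cdot>\<^sub>v unit_vec p 0"
  unfolding tpow_def by simp

lemma tpow3: "0 < p \<Longrightarrow> tpow p c (- 1) = inverse c \<cdot>\<^sub>v unit_vec p (p - 1)"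
proof -
  assume p: "0 < p"
  have d: "(- 1) div int p = - 1" using p by (simp add: div_eq_minus1)
  have m: "(- 1) mod int p = int p - 1" using p by (simp add: zmod_minus1)
  show ?thesis unfolding tpow_def d m using p by (simp add: nat_diff_distrib power_int_minus)
qed


lemma col_A'X: "j < p \<Longrightarrow> col (A'_X p c) j = tpow p c (int j + 1)"
  unfolding A'_X_def by (intro eq_vecI) auto
lemma col_A'Y: "j < p \<Longrightarrow> col (A'_Y lam zd p c) j = (lam (int j) + zd) \<cdot>\<^sub>v tpow p c (int j - 1)"
  unfolding A'_Y_def by (intro eq_vecI) auto
lemma col_A'H: "j < p \<Longrightarrow> col (A'_H lam p c) j = lam (int j) \<cdot>\<^sub>v tpow p c (int j)"
  unfolding A'_H_def by (intro eq_vecI) auto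

lemma A'_carrier[simp]: "A'_X p c \<in> carrier_mat p p" "A'_Y lam zd p c \<in> carrier_mat p p" "A'_H lam p c \<in> carrier_mat p p"
  unfolding A'_X_def A'_Y_def A'_H_def by auto



locale hf3 = hf2 +
  fixes mu :: complex and p :: nat and v0 :: "complex vec" and c :: complex
  assumes p0: "0 < p" and pn: "p \<le> n" and per: "(poly f ^^ p) mu = mu"
    and dist: "\<And>a b. a < b \<Longrightarrow> b < p \<Longrightarrow> (poly f ^^ a) mu \<noteq> (poly f ^^ b) mu"
    and v0: "v0 \<in> carrier_vec n" "v0 \<noteq> 0\<^sub>v n" and Hv0: "H *\<^sub>v v0 = mu \<cdot>\<^sub>v v0"
    and Xpv0: "(X ^\<^sub>m p) *\<^sub>v v0 = c \<cdot>\<^sub>v v0" and c0: "c \<noteq> 0"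
begin

definition lam :: "int \<Rightarrow> complex" where "lam i = (poly f ^^ nat (i mod int p)) mu"

definition Q where "Q = mat n p (\<lambda>(r, i). ((X ^\<^sub>m i) *\<^sub>v v0) $ r)"

lemma Q[simp]: "Q \<in> carrier_mat n p" unfolding Q_def by simp

lemma colQ: "i < p \<Longrightarrow> col Q i = (X ^\<^sub>m i) *\<^sub>v v0"
  unfolding Q_def using v0 by (intro eq_vecI) auto

lemma Qe: "i < p \<Longrightarrow> Q *\<^sub>v unit_vec p i = (X ^\<^sub>m i) *\<^sub>v v0"
  using col_unit[OF Q] colQ by simp

lemma Qs: "i < p \<Longrightarrow> Q *\<^sub>v (a \<cdot>\<^sub>v unit_vec p i) = a \<cdot>\<^sub>v ((X ^\<^sub>m i) *\<^sub>v v0)"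
  using Qe mult_mat_vec[OF Q unit_vec_carrier] by simp

lemma lam_j: "j < p \<Longrightarrow> lam (int j) = (poly f ^^ j) mu"
  unfolding lam_def by simp

lemma HXj: "H *\<^sub>v ((X ^\<^sub>m j) *\<^sub>v v0) = (poly f ^^ j) mu \<cdot>\<^sub>v ((X ^\<^sub>m j) *\<^sub>v v0)"
  by (rule eig_iter[OF v0(1) Hv0])

lemma XiXj: "Xi *\<^sub>v ((X ^\<^sub>m Suc j) *\<^sub>v v0) = (X ^\<^sub>m j) *\<^sub>v v0"
  using v0 by (simp only: powv_Suc' XiX mv_carrier pow_carrier_mat X)

lemma Xiv0: "Xi *\<^sub>v v0 = inverse c \<cdot>\<^sub>v ((X ^\<^sub>m (p - 1)) *\<^sub>v v0)"
proof -
  have "(X ^\<^sub>m (p - 1)) *\<^sub>v v0 = Xi *\<^sub>v ((X ^\<^sub>m p) *\<^sub>v v0)" using XiXj[of "p - 1"] p0 by simp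
  also have "\<dots> = c \<cdot>\<^sub>v (Xi *\<^sub>v v0)" using Xpv0 v0 by simp
  finally have "(X ^\<^sub>m (p - 1)) *\<^sub>v v0 = c \<cdot>\<^sub>v (Xi *\<^sub>v v0)" .
  hence "inverse c \<cdot>\<^sub>v ((X ^\<^sub>m (p - 1)) *\<^sub>v v0) = inverse c \<cdot>\<^sub>v (c \<cdot>\<^sub>v (Xi *\<^sub>v v0))" by simp
  also have "\<dots> = Xi *\<^sub>v v0" using c0 v0 by (intro vec_eq_n[of _ n]) (auto simp del: index_mult_mat_vec)
  finally show ?thesis by simp
qed

lemma interX: "X * Q = Q * A'_X p c"
proof (rule mat_col_eqI[of _ n p])
  fix j assume j: "j < p"
  have "col (X * Q) j = X *\<^sub>v ((X ^\<^sub>m j) *\<^sub>v v0)" using col_mult2[OF X Q j] colQ[OF j] by simp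
  also have "\<dots> = (X ^\<^sub>m Suc j) *\<^sub>v v0" using v0 by (simp only: powv_Suc')
  also have "\<dots> = Q *\<^sub>v tpow p c (int j + 1)"
  proof (cases "Suc j < p")
    case True
    have "tpow p c (int j + 1) = unit_vec p (Suc j)" using tpow1[OF True, of c] by (simp add: add.commute)
    thus ?thesis using Qe[OF True] by simp
  next
    case False
    hence jp: "Suc j = p" using j by simp
    have e: "int j + 1 = int p" using jp by simp
    have "tpow p c (int j + 1) = c \<cdot>\<^sub>v unit_vec p 0" unfolding e by (rule tpow2[OF p0])
    moreover have "Q *\<^sub>v (c \<cdot>\<^sub>v unit_vec p 0) = c \<cdot>\<^sub>v v0" using Qs[OF p0, of c] v0 by simp
    ultimately show ?thesis using Xpv0 jp by simp
  qed
  also have "\<dots> = col (Q * A'_X p c) j" using col_mult2[OF Q _ j, of "A'_X p c"] col_A'X[OF j] by simp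
  finally show "col (X * Q) j = col (Q * A'_X p c) j" .
qed (use mult_carrier_mat[OF X Q] mult_carrier_mat[OF Q A'_carrier(1)] in auto)

lemma interH: "H * Q = Q * A'_H lam p c"
proof (rule mat_col_eqI[of _ n p])
  fix j assume j: "j < p"
  have "col (H * Q) j = H *\<^sub>v ((X ^\<^sub>m j) *\<^sub>v v0)" using col_mult2[OF H Q j] colQ[OF j] by simp
  also have "\<dots> = lam (int j) \<cdot>\<^sub>v ((X ^\<^sub>m j) *\<^sub>v v0)" using HXj lam_j[OF j] by simp
  also have "\<dots> = Q *\<^sub>v (lam (int j) \<cdot>\<^sub>v tpow p c (int j))" using tpow1[OF j] Qs[OF j] by simp
  also have "\<dots> = col (Q * A'_H lam p c) j" using col_mult2[OF Q _ j, of "A'_H lam p c"] col_A'H[OF j] by simp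
  finally show "col (H * Q) j = col (Q * A'_H lam p c) j" .
qed (use mult_carrier_mat[OF H Q] mult_carrier_mat[OF Q A'_carrier(3)] in auto)

lemma interY: "Y * Q = Q * A'_Y lam zd p c"
proof (rule mat_col_eqI[of _ n p])
  fix j assume j: "j < p"
  let ?u = "(X ^\<^sub>m j) *\<^sub>v v0"
  have u: "?u \<in> carrier_vec n" using v0 by simp
  have "col (Y * Q) j = Y *\<^sub>v ?u" using col_mult2[OF Y Q j] colQ[OF j] by simp
  also have "\<dots> = Xi *\<^sub>v (H *\<^sub>v ?u + zd \<cdot>\<^sub>v ?u)" using Yv[OF u] .
  also have "H *\<^sub>v ?u + zd \<cdot>\<^sub>v ?u = (lam (int j) + zd) \<cdot>\<^sub>v ?u" using HXj lam_j[OF j] u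
    by (intro vec_eq_n[of _ n]) (auto simp: algebra_simps simp del: index_mult_mat_vec)
  also have "Xi *\<^sub>v ((lam (int j) + zd) \<cdot>\<^sub>v ?u) = (lam (int j) + zd) \<cdot>\<^sub>v (Xi *\<^sub>v ?u)" using u by simp
  also have "Xi *\<^sub>v ?u = Q *\<^sub>v tpow p c (int j - 1)"
  proof (cases j)
    case 0
    have "int j - 1 = - 1" using 0 by simp
    thus ?thesis using 0 tpow3[OF p0] Qs[of "p - 1" "inverse c"] p0 Xiv0 v0 by simp
  next
    case (Suc j')
    have jj: "int j - 1 = int j'" using Suc by simp
    show ?thesis unfolding jj using Suc XiXj[of j'] tpow1[of j' p] Qe[of j'] j by simp
  qed
  also have "(lam (int j) + zd) \<cdot>\<^sub>v (Q *\<^sub>v tpow p c (int j - 1)) = Q *\<^sub>v ((lam (int j) + zd) \<cdot>\<^sub>v tpow p c (int j - 1))"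
    using mult_mat_vec[OF Q tpow_carrier] by simp
  also have "\<dots> = col (Q * A'_Y lam zd p c) j" using col_mult2[OF Q _ j, of "A'_Y lam zd p c"] col_A'Y[OF j] by simp
  finally show "col (Y * Q) j = col (Q * A'_Y lam zd p c) j" .
qed (use mult_carrier_mat[OF Y Q] mult_carrier_mat[OF Q A'_carrier(2)] in auto)

end

context hf3 begin

lemma Q_surj: "\<exists>R\<in>carrier_mat p n. Q * R = 1\<^sub>m n"
proof -
  have sub: "Hf_submodule n X Y H {Q *\<^sub>v w | w. w \<in> carrier_vec p}"
    by (rule sub_img[OF Q A'_carrier interX interY interH])
  have "Q *\<^sub>v unit_vec p 0 = v0" using Qe[OF p0] v0 by simp
  hence "{Q *\<^sub>v w | w. w \<in> carrier_vec p} \<noteq> {0\<^sub>v n}" using v0(2) by (metis (mono_tags, lifting) insertI1 mem_Collect_eq singletonD unit_vec_carrier)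
  hence all: "{Q *\<^sub>v w | w. w \<in> carrier_vec p} = carrier_vec n" using simpl[OF sub] by auto
  define wj where "wj j = (SOME w. w \<in> carrier_vec p \<and> Q *\<^sub>v w = unit_vec n j)" for j
  have wj: "wj j \<in> carrier_vec p \<and> Q *\<^sub>v wj j = unit_vec n j" if "j < n" for j
  proof -
    have "unit_vec n j \<in> {Q *\<^sub>v w | w. w \<in> carrier_vec p}" using all by simp
    hence "\<exists>w. w \<in> carrier_vec p \<and> Q *\<^sub>v w = unit_vec n j" by auto
    thus ?thesis unfolding wj_def by (rule someI_ex)
  qed
  define R where "R = mat p n (\<lambda>(i, j). wj j $ i)"
  have R: "R \<in> carrier_mat p n" unfolding R_def by simp
  have colR: "col R j = wj j" if "j < n" for j
    unfolding R_def using that wj[OF that] by (intro eq_vecI) auto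
  have "Q * R = 1\<^sub>m n"
    by (rule mat_col_eqI[of _ n n]) (use R wj colR mult_carrier_mat[OF Q R] in \<open>auto simp: col_mult2[OF Q R]\<close>)
  thus ?thesis using R by blast
qed

lemma p_eq_n: "p = n"
proof (rule ccontr)
  assume "p \<noteq> n"
  hence pn': "p < n" using pn by simp
  obtain R where R: "R \<in> carrier_mat p n" and QR: "Q * R = 1\<^sub>m n" using Q_surj by blast
  define Q' where "Q' = mat n n (\<lambda>(r, i). if i < p then Q $$ (r, i) else 0)"
  define R' where "R' = mat n n (\<lambda>(i, r). if i < p then R $$ (i, r) else 0)"
  have Q': "Q' \<in> carrier_mat n n" and R': "R' \<in> carrier_mat n n" unfolding Q'_def R'_def by auto
  have "Q' * R' = Q * R"
  proof (rule eq_matI)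
    fix r s assume r: "r < dim_row (Q * R)" and s: "s < dim_col (Q * R)"
    hence r: "r < n" and s: "s < n" using Q R by auto
    have "(Q' * R') $$ (r, s) = (\<Sum>k\<in>{0..<n}. (if k < p then Q $$ (r, k) else 0) * (if k < p then R $$ (k, s) else 0))"
      using r s unfolding Q'_def R'_def by (simp add: scalar_prod_def)
    also have "\<dots> = (\<Sum>k\<in>{0..<p}. Q $$ (r, k) * R $$ (k, s))"
      by (rule sum.mono_neutral_cong_right) (use pn' in auto)
    also have "\<dots> = (Q * R) $$ (r, s)" using r s carrier_matD[OF Q] carrier_matD[OF R] by (simp add: scalar_prod_def)
    finally show "(Q' * R') $$ (r, s) = (Q * R) $$ (r, s)" .
  qed (use carrier_matD[OF Q] carrier_matD[OF R] Q' R' in auto)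
  hence "det (Q' * R') = 1" using QR by simp
  hence d1: "det Q' * det R' = 1" using det_mult[OF Q' R'] by simp
  have "det Q' = 0"
  proof (subst det_0_iff_vec_prod_zero[OF Q'], intro exI conjI)
    show "unit_vec n (n - 1) \<in> carrier_vec n" by simp
    show "unit_vec n (n - 1) \<noteq> (0\<^sub>v n :: complex vec)"
    proof
      assume eq: "unit_vec n (n - 1) = (0\<^sub>v n :: complex vec)"
      have "(unit_vec n (n - 1) :: complex vec) $ (n - 1) = 1" using n0 by simp
      moreover have "(0\<^sub>v n :: complex vec) $ (n - 1) = 0" using n0 by simp
      ultimately show False using eq by simp
    qed
    have "Q' *\<^sub>v unit_vec n (n - 1) = col Q' (n - 1)" using col_unit[OF Q', of "n - 1"] n0 by simp
    also have "\<dots> = 0\<^sub>v n" unfolding Q'_def using n0 pn' by (intro eq_vecI) auto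
    finally show "Q' *\<^sub>v unit_vec n (n - 1) = 0\<^sub>v n" .
  qed
  thus False using d1 by simp
qed

end


lemma conj_lemma:
  fixes A0 B0 Q R :: "complex mat"
  assumes A0: "A0 \<in> carrier_mat n n" and B0: "B0 \<in> carrier_mat n n" and Q: "Q \<in> carrier_mat n n"
    and R: "R \<in> carrier_mat n n" and QR: "Q * R = 1\<^sub>m n" and RQ: "R * Q = 1\<^sub>m n" and AQ: "A0 * Q = Q * B0"
  shows "R * A0 = B0 * R"
proof (rule mat_eq_vecI[of _ n n])
  fix v :: "complex vec" assume v: "v \<in> carrier_vec n"
  have Rv: "R *\<^sub>v v \<in> carrier_vec n" using R v by simp
  have "R * A0 *\<^sub>v v = R *\<^sub>v (A0 *\<^sub>v (Q *\<^sub>v (R *\<^sub>v v)))"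
    using assoc_mult_mat_vec[OF R A0 v] assoc_mult_mat_vec[OF Q R v] QR v by simp
  also have "A0 *\<^sub>v (Q *\<^sub>v (R *\<^sub>v v)) = Q *\<^sub>v (B0 *\<^sub>v (R *\<^sub>v v))"
    using assoc_mult_mat_vec[OF A0 Q Rv] assoc_mult_mat_vec[OF Q B0 Rv] AQ by simp
  also have "R *\<^sub>v (Q *\<^sub>v (B0 *\<^sub>v (R *\<^sub>v v))) = B0 *\<^sub>v (R *\<^sub>v v)"
    using assoc_mult_mat_vec[OF R Q, of "B0 *\<^sub>v (R *\<^sub>v v)"] RQ B0 Rv by simp
  also have "\<dots> = B0 * R *\<^sub>v v" using assoc_mult_mat_vec[OF B0 R v] by simp
  finally show "R * A0 *\<^sub>v v = B0 * R *\<^sub>v v" .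
qed (use A0 B0 R in auto)

context hf3 begin

lemma iso: "Hf_iso n X Y H (A'_X n c) (A'_Y lam zd n c) (A'_H lam n c)"
proof -
  have Q': "Q \<in> carrier_mat n n" using Q p_eq_n by simp
  obtain R where R: "R \<in> carrier_mat n n" and QR: "Q * R = 1\<^sub>m n" using Q_surj p_eq_n by auto
  have RQ: "R * Q = 1\<^sub>m n" by (rule mat_mult_left_right_inverse[OF Q' R QR])
  show ?thesis unfolding Hf_iso_def
  proof (intro bexI[OF _ R] conjI)
    show "invertible_mat R" unfolding invertible_mat_def inverts_mat_def square_mat.simps
      using R Q' QR RQ by (intro conjI exI[of _ Q]) auto
    show "R * X = A'_X n c * R" using conj_lemma[OF X _ Q' R QR RQ, of "A'_X n c"] interX p_eq_n by simp
    show "R * Y = A'_Y lam zd n c * R" using conj_lemma[OF Y _ Q' R QR RQ, of "A'_Y lam zd n c"] interY p_eq_n by simp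
    show "R * H = A'_H lam n c * R" using conj_lemma[OF H _ Q' R QR RQ, of "A'_H lam n c"] interH p_eq_n by simp
  qed
qed

lemma lam_Sf: "lam \<in> S_f f"
  unfolding S_f_def
proof (intro CollectI allI)
  fix i :: int
  define m where "m = nat (i mod int p)"
  have mp: "m < p" unfolding m_def using p0 by (simp add: nat_less_iff)
  have im: "i mod int p = int m" unfolding m_def using p0 by simp
  have "poly f (lam i) = (poly f ^^ Suc m) mu" unfolding lam_def m_def by (simp only: funpow.simps o_apply)
  also have "\<dots> = lam (i + 1)"
  proof (cases "Suc m < p")
    case True
    have "(i + 1) mod int p = (i mod int p + 1) mod int p" by (simp add: mod_add_left_eq)
    also have "i mod int p + 1 = int (Suc m)" using im by simp
    also have "int (Suc m) mod int p = int (Suc m)" using True by simp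
    finally have "nat ((i + 1) mod int p) = Suc m" by (simp only: nat_int)
    thus ?thesis unfolding lam_def by (simp only:)
  next
    case False
    hence sm: "Suc m = p" using mp by simp
    have "(i + 1) mod int p = (i mod int p + 1) mod int p" by (simp add: mod_add_left_eq)
    also have "i mod int p + 1 = int p" using im sm by simp
    finally have "(i + 1) mod int p = 0" by simp
    thus ?thesis unfolding lam_def using sm per by simp
  qed
  finally show "poly f (lam i) = lam (i + 1)" .
qed


lemma lam_period_n: "lam_period lam = n"
proof -
  have set: "{m::int. \<forall>i. lam (i + m) = lam i} = range (\<lambda>k::int. k * int p)"
  proof (intro equalityI subsetI)
    fix m assume "m \<in> {m::int. \<forall>i. lam (i + m) = lam i}"
    hence "lam (0 + m) = lam 0" by blast
    hence eq: "(poly f ^^ nat (m mod int p)) mu = (poly f ^^ 0) mu" unfolding lam_def by simp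
    have lt: "nat (m mod int p) < p" using p0 by (simp add: nat_less_iff)
    have "nat (m mod int p) = 0"
    proof (rule ccontr)
      assume "nat (m mod int p) \<noteq> 0"
      thus False using dist[of 0 "nat (m mod int p)"] eq lt by auto
    qed
    moreover have "0 \<le> m mod int p" using p0 by simp
    ultimately have "m mod int p = 0" by linarith
    hence "int p dvd m" by (simp add: dvd_eq_mod_eq_0)
    then obtain k where "m = int p * k" by (rule dvdE)
    thus "m \<in> range (\<lambda>k::int. k * int p)" by (intro range_eqI[where x=k]) (simp add: mult.commute)
  next
    fix m assume "m \<in> range (\<lambda>k::int. k * int p)"
    then obtain k where m: "m = k * int p" by blast
    show "m \<in> {m::int. \<forall>i. lam (i + m) = lam i}" unfolding m lam_def by simp
  qed
  show ?thesis unfolding lam_period_def set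
  proof (rule the_equality)
    show "range (\<lambda>k::int. k * int p) = range (\<lambda>k. k * int n)" using p_eq_n by simp
    fix g :: nat assume g: "range (\<lambda>k::int. k * int p) = range (\<lambda>k. k * int g)"
    have "int p \<in> range (\<lambda>k::int. k * int p)" by (rule range_eqI[where x=1]) simp
    hence "int p \<in> range (\<lambda>k. k * int g)" unfolding g .
    then obtain k1 where "int p = k1 * int g" by blast
    hence d1: "int g dvd int p" by (metis dvd_triv_right)
    have "int g \<in> range (\<lambda>k::int. k * int g)" by (rule range_eqI[where x=1]) simp
    hence "int g \<in> range (\<lambda>k. k * int p)" unfolding g .
    then obtain k2 where "int g = k2 * int p" by blast
    hence d2: "int p dvd int g" by (metis dvd_triv_right)
    have "g = p" using d1 d2 by (simp add: dvd_antisym)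
    thus "g = n" using p_eq_n by simp
  qed
qed

end



theorem lemma9:
  fixes f :: "complex poly" and n :: nat and X Y H :: "complex mat"
  assumes "Hf_simple f n X Y H"
    and "X ^\<^sub>m n \<noteq> 0\<^sub>m n n"
  shows "\<exists>zd a lam. a \<noteq> 0 \<and> lam \<in> S_f f \<and> lam_period lam = n \<and>
           Hf_iso n X Y H (A'_X n a) (A'_Y lam zd n a) (A'_H lam n a)"
proof -
  interpret h2: hf2 f n X Y H by (unfold_locales) (use assms in auto)
  obtain mu p v0 c where props: "0 < p" "p \<le> n" "(poly f ^^ p) mu = mu"
    "\<forall>a b. a < b \<longrightarrow> b < p \<longrightarrow> (poly f ^^ a) mu \<noteq> (poly f ^^ b) mu"
    "v0 \<in> carrier_vec n" "v0 \<noteq> 0\<^sub>v n" "H *\<^sub>v v0 = mu \<cdot>\<^sub>v v0" "(X ^\<^sub>m p) *\<^sub>v v0 = c \<cdot>\<^sub>v v0" "c \<noteq> 0"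
    using h2.cycle by blast
  interpret h3: hf3 f n X Y H mu p v0 c by (unfold_locales) (use props in auto)
  show ?thesis using h3.iso h3.lam_Sf h3.lam_period_n props(9) by blast
qed

end
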